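(* Every left nilpotent monoid and every supernilpotent monoid is cancellative.
   Context: Monoids are regarded as semigroups $(S,\cdot)$. For congruences $\alpha_1,\dots,\alpha_n$, $M(\alpha_1,\dots,\alpha_n)$ is the subsemigroup of $S^{\{0,1\}^n}$ generated by all $g$ such that for some $i$ and $(a,b)\in\alpha_i$, $g(x)=a$ if $x_i=0$ and $g(x)=b$ if $x_i=1$; $[\alpha_1,\dots,\alpha_n]$ is the smallest congruence $\delta$ such that for all $f\in M(\alpha_1,\dots,\alpha_n)$: if $(f(x0),f(x1))\in\delta$ for all $x\in\{0,1\}^{n-1}\setminus\{(1,\dots,1)\}$ then $(f(1,\dots,1,0),f(1,\dots,1,1))\in\delta$. With $1$ total and $0$ trivial congruence: $(1]^1=1$, $(1]^{k+1}=[1,(1]^k]$. $S$ is left nilpotent if $(1]^{d+1}=0$ for some $d\in\mathbb N$, and supernilpotent if the $(d+1)$-ary commutator $[1,\dots,1]=0$ for some $d\in\mathbb N$. *)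

theory Defs
  imports Main
begin

text \<open>Monoids are type-class monoids 'a :: monoid_mult, regarded as semigroups
(the whole type is the carrier). Relations are sets of pairs.\<close>

definition is_congruence :: "'a::semigroup_mult rel \<Rightarrow> bool" where
  "is_congruence \<alpha> \<longleftrightarrow> equiv UNIV \<alpha> \<and>
     (\<forall>a b c d. (a, b) \<in> \<alpha> \<longrightarrow> (c, d) \<in> \<alpha> \<longrightarrow> (a * c, b * d) \<in> \<alpha>)"

text \<open>Points of {0,1}^n are boolean lists of length n (False = 0, True = 1),
coordinates indexed 0..n-1. Functions {0,1}^n \<rightarrow> S are functions on bool lists;
only their values on lists of length n matter.\<close>

inductive_set Mset :: "'a::semigroup_mult rel list \<Rightarrow> (bool list \<Rightarrow> 'a) set"
  for \<alpha>s :: "'a rel list" where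
  gen: "i < length \<alpha>s \<Longrightarrow> (a, b) \<in> \<alpha>s ! i \<Longrightarrow>
          (\<lambda>x. if x ! i then b else a) \<in> Mset \<alpha>s"
| mult: "f \<in> Mset \<alpha>s \<Longrightarrow> g \<in> Mset \<alpha>s \<Longrightarrow> (\<lambda>x. f x * g x) \<in> Mset \<alpha>s"

definition comm_closed :: "'a::semigroup_mult rel list \<Rightarrow> 'a rel \<Rightarrow> bool" where
  "comm_closed \<alpha>s \<delta> \<longleftrightarrow>
     (\<forall>f \<in> Mset \<alpha>s.
        (\<forall>x. length x = length \<alpha>s - 1 \<and> x \<noteq> replicate (length \<alpha>s - 1) True \<longrightarrow>
              (f (x @ [False]), f (x @ [True])) \<in> \<delta>) \<longrightarrow>
        (f (replicate (length \<alpha>s - 1) True @ [False]),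
         f (replicate (length \<alpha>s - 1) True @ [True])) \<in> \<delta>)"

definition commutator :: "'a::semigroup_mult rel list \<Rightarrow> 'a rel" where
  "commutator \<alpha>s = \<Inter> {\<delta>. is_congruence \<delta> \<and> comm_closed \<alpha>s \<delta>}"

text \<open>(1]^1 = 1, (1]^(k+1) = [1, (1]^k]; left_comm_power k = (1]^(k+1).\<close>
fun left_comm_power :: "nat \<Rightarrow> 'a::semigroup_mult rel" where
  "left_comm_power 0 = UNIV"
| "left_comm_power (Suc k) = commutator [UNIV, left_comm_power k]"

definition left_nilpotent :: "'a::semigroup_mult itself \<Rightarrow> bool" where
  "left_nilpotent _ \<longleftrightarrow> (\<exists>d::nat. (left_comm_power d :: 'a rel) = Id)"

definition supernilpotent :: "'a::semigroup_mult itself \<Rightarrow> bool" where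
  "supernilpotent _ \<longleftrightarrow> (\<exists>d::nat. commutator (replicate (d + 1) (UNIV :: 'a rel)) = Id)"

definition cancellative :: "'a::semigroup_mult itself \<Rightarrow> bool" where
  "cancellative _ \<longleftrightarrow>
     (\<forall>a b c :: 'a. (a * b = a * c \<longrightarrow> b = c) \<and> (b * a = c * a \<longrightarrow> b = c))"

end

theory Submission
  imports Defs
begin

primrec PR :: "'a::monoid_mult \<Rightarrow> nat \<Rightarrow> bool list \<Rightarrow> 'a" where
  "PR a 0 x = 1"
| "PR a (Suc j) x = (if x ! j then 1 else a) * PR a j x"

primrec PL :: "'a::monoid_mult \<Rightarrow> nat \<Rightarrow> bool list \<Rightarrow> 'a" where
  "PL a 0 x = 1"
| "PL a (Suc j) x = PL a j x * (if x ! j then 1 else a)"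

primrec RR :: "'a::monoid_mult \<Rightarrow> (bool list \<Rightarrow> 'a) \<Rightarrow> nat \<Rightarrow> bool list \<Rightarrow> 'a" where
  "RR a h 0 = h"
| "RR a h (Suc j) = (\<lambda>x. (if x ! j then 1 else a) * RR a h j x)"

primrec LL :: "'a::monoid_mult \<Rightarrow> (bool list \<Rightarrow> 'a) \<Rightarrow> nat \<Rightarrow> bool list \<Rightarrow> 'a" where
  "LL a h 0 = h"
| "LL a h (Suc j) = (\<lambda>x. LL a h j x * (if x ! j then 1 else a))"

lemma RR_eq: "RR a h j x = PR a j x * h x"
  by (induction j) (auto simp: mult.assoc)

lemma LL_eq: "LL a h j x = h x * PL a j x"
  by (induction j) (auto simp: mult.assoc)

lemma PR_app: "j \<le> length x \<Longrightarrow> PR a j (x @ ys) = PR a j x"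
  by (induction j) (auto simp: nth_append)

lemma PL_app: "j \<le> length x \<Longrightarrow> PL a j (x @ ys) = PL a j x"
  by (induction j) (auto simp: nth_append)

lemma PR_val: "\<exists>k. PR a j x = a ^ k \<and> ((\<exists>i<j. \<not> x ! i) \<longrightarrow> k > 0)"
proof (induction j)
  case 0 then show ?case by (intro exI[of _ 0]) simp
next
  case (Suc j)
  then obtain k where k: "PR a j x = a ^ k" "(\<exists>i<j. \<not> x ! i) \<longrightarrow> k > 0" by blast
  show ?case
  proof (cases "x ! j")
    case True
    then show ?thesis using k by (intro exI[of _ k]) (auto simp: less_Suc_eq)
  next
    case False
    then show ?thesis using k by (intro exI[of _ "Suc k"]) auto
  qed
qed

lemma PL_val: "\<exists>k. PL a j x = a ^ k \<and> ((\<exists>i<j. \<not> x ! i) \<longrightarrow> k > 0)"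
proof (induction j)
  case 0 then show ?case by (intro exI[of _ 0]) simp
next
  case (Suc j)
  then obtain k where k: "PL a j x = a ^ k" "(\<exists>i<j. \<not> x ! i) \<longrightarrow> k > 0" by blast
  show ?case
  proof (cases "x ! j")
    case True
    then show ?thesis using k by (intro exI[of _ k]) (auto simp: less_Suc_eq)
  next
    case False
    then show ?thesis using k by (intro exI[of _ "Suc k"]) (auto simp: power_Suc2 power_commutes)
  qed
qed

lemma PR_true: "(\<forall>i<j. x ! i) \<Longrightarrow> PR a j x = 1"
  by (induction j) auto

lemma PL_true: "(\<forall>i<j. x ! i) \<Longrightarrow> PL a j x = 1"
  by (induction j) auto

lemma RR_mem:
  assumes "\<forall>i<m. \<alpha>s ! i = UNIV" "h \<in> Mset \<alpha>s" "length \<alpha>s = Suc m"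
  shows "j \<le> m \<Longrightarrow> RR a h j \<in> Mset \<alpha>s"
proof (induction j)
  case 0 then show ?case using assms by simp
next
  case (Suc j)
  have "(\<lambda>x. if x ! j then 1 else a) \<in> Mset \<alpha>s"
    using Suc.prems assms by (intro Mset.gen) auto
  then show ?case using Suc Mset.mult by fastforce
qed

lemma LL_mem:
  assumes "\<forall>i<m. \<alpha>s ! i = UNIV" "h \<in> Mset \<alpha>s" "length \<alpha>s = Suc m"
  shows "j \<le> m \<Longrightarrow> LL a h j \<in> Mset \<alpha>s"
proof (induction j)
  case 0 then show ?case using assms by simp
next
  case (Suc j)
  have "(\<lambda>x. if x ! j then 1 else a) \<in> Mset \<alpha>s"
    using Suc.prems assms by (intro Mset.gen) auto
  then show ?case using Suc Mset.mult by fastforce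
qed

lemma not_rep: "length x = m \<Longrightarrow> x \<noteq> replicate m True \<Longrightarrow> \<exists>i<m. \<not> x ! i"
  by (metis (full_types) length_replicate nth_equalityI nth_replicate)

lemma key:
  fixes a b c :: "'a::monoid_mult"
  assumes len: "length \<alpha>s = Suc m" and U: "\<forall>i<m. \<alpha>s ! i = UNIV" and bc: "(b, c) \<in> \<alpha>s ! m"
    and canc: "a * b = a * c \<or> b * a = c * a"
  shows "(b, c) \<in> commutator \<alpha>s"
  unfolding commutator_def
proof (intro InterI, clarify)
  fix \<delta> :: "'a rel"
  assume cong: "is_congruence \<delta>" and cc: "comm_closed \<alpha>s \<delta>"
  have refl: "(y, y) \<in> \<delta>" for y using cong unfolding is_congruence_def equiv_def refl_on_def by blast
  define h where "h = (\<lambda>x::bool list. if x ! m then c else b)"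
  have hm: "h \<in> Mset \<alpha>s" unfolding h_def using len bc by (intro Mset.gen) auto
  have hF: "h (x @ [False]) = b" and hT: "h (x @ [True]) = c" if "length x = m" for x
    using that by (auto simp: h_def nth_append)
  have rep: "\<forall>i<m. (replicate m True) ! i" by simp
  have cc': "f \<in> Mset \<alpha>s \<Longrightarrow> (\<And>x. length x = m \<Longrightarrow> x \<noteq> replicate m True \<Longrightarrow>
              (f (x @ [False]), f (x @ [True])) \<in> \<delta>) \<Longrightarrow>
        (f (replicate m True @ [False]), f (replicate m True @ [True])) \<in> \<delta>" for f
    using cc len unfolding comm_closed_def by auto
  show "(b, c) \<in> \<delta>"
    using canc
  proof
    assume abc: "a * b = a * c"
    let ?f = "RR a h m"
    have fm: "?f \<in> Mset \<alpha>s" using RR_mem[OF U hm len] by simp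
    have "(?f (replicate m True @ [False]), ?f (replicate m True @ [True])) \<in> \<delta>"
    proof (rule cc'[OF fm])
      fix x :: "bool list" assume x: "length x = m" "x \<noteq> replicate m True"
      obtain k where k: "PR a m x = a ^ k" "k > 0" using PR_val[of a m x] not_rep[OF x] by blast
      then obtain k' where "k = Suc k'" using gr0_conv_Suc by blast
      then have "a ^ k * b = a ^ k * c" using abc
        by (metis power_Suc2 mult.assoc)
      then show "(?f (x @ [False]), ?f (x @ [True])) \<in> \<delta>"
        using refl x by (simp add: RR_eq PR_app hF hT k)
    qed
    then show ?thesis by (simp add: PR_true[OF rep] RR_eq PR_app hF hT)
  next
    assume abc: "b * a = c * a"
    let ?f = "LL a h m"
    have fm: "?f \<in> Mset \<alpha>s" using LL_mem[OF U hm len] by simp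
    have "(?f (replicate m True @ [False]), ?f (replicate m True @ [True])) \<in> \<delta>"
    proof (rule cc'[OF fm])
      fix x :: "bool list" assume x: "length x = m" "x \<noteq> replicate m True"
      obtain k where k: "PL a m x = a ^ k" "k > 0" using PL_val[of a m x] not_rep[OF x] by blast
      then obtain k' where "k = Suc k'" using gr0_conv_Suc by blast
      then have "b * a ^ k = c * a ^ k" using abc by (simp add: mult.assoc[symmetric])
      then show "(?f (x @ [False]), ?f (x @ [True])) \<in> \<delta>"
        using refl x by (simp add: LL_eq PL_app hF hT k)
    qed
    then show ?thesis by (simp add: PL_true[OF rep] LL_eq PL_app hF hT)
  qed
qed

lemma lcp_mem:
  fixes a b c :: "'a::monoid_mult"
  assumes "a * b = a * c \<or> b * a = c * a"
  shows "(b, c) \<in> (left_comm_power k :: 'a rel)"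
proof (induction k)
  case 0 then show ?case by simp
next
  case (Suc k)
  show ?case using key[of "[UNIV, left_comm_power k]" 1 b c a] Suc assms by simp
qed

theorem lemma4p3:
  shows "(left_nilpotent TYPE('a::monoid_mult) \<longrightarrow> cancellative TYPE('a))
       \<and> (supernilpotent TYPE('a) \<longrightarrow> cancellative TYPE('a))"
proof (intro conjI impI)
  assume "left_nilpotent TYPE('a)"
  then obtain d where d: "(left_comm_power d :: 'a rel) = Id" unfolding left_nilpotent_def by blast
  show "cancellative TYPE('a)" unfolding cancellative_def
    using lcp_mem[where k = d] d by blast
next
  assume "supernilpotent TYPE('a)"
  then obtain d where d: "commutator (replicate (d + 1) (UNIV :: 'a rel)) = Id"
    unfolding supernilpotent_def by blast
  have "(b, c) \<in> commutator (replicate (d + 1) (UNIV :: 'a rel))"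
    if "a * b = a * c \<or> b * a = c * a" for a b c :: 'a
    using key[of "replicate (d + 1) (UNIV :: 'a rel)" d b c a] that
    by (simp del: replicate.simps replicate_Suc add: nth_replicate)
  then show "cancellative TYPE('a)" unfolding cancellative_def using d by blast
qed

end
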